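(* Let $\mathcal{A}\subseteq\mathbb{R}^3$ be measurable with finite positive measure, $k_0>0$, $\eta>0$, $\sigma^2>0$, and for $k\in\{1,2\}$ let $\mathsf{G}_k\in L^2(\mathcal{A})$ with $\mathsf{g}_k=\int_{\mathcal{A}}|\mathsf{G}_k(\mathbf{r})|^2\mathrm{d}\mathbf{r}>0$, $\mathsf{H}_k(\mathbf{r})=\frac{\mathrm{j}k_0\eta}{\sqrt{4\pi}}\mathsf{G}_k(\mathbf{r})$, $A_{\mathsf{u},k}>0$, $\mathsf{J}_{\mathsf{ul},k}\in\mathbb{C}$, and $\overline{\gamma}_{\mathsf{ul},k}=\frac{A_{\mathsf{u},k}^2|\mathsf{J}_{\mathsf{ul},k}|^2k_0^2\eta^2}{4\pi\sigma^2}$. Let $\rho=\frac{\int_{\mathcal{A}}\mathsf{G}_1^*(\mathbf{r})\mathsf{G}_2(\mathbf{r})\mathrm{d}\mathbf{r}}{\sqrt{\mathsf{g}_1\mathsf{g}_2}}$. Let $\mu_1=-\frac{1}{\mathsf{g}_1}\pm\frac{1}{\mathsf{g}_1\sqrt{1+\overline{\gamma}_{\mathsf{ul},1}\mathsf{g}_1}}$ and $\mathsf{W}_{\mathsf{Z}}(\mathbf{r}',\mathbf{r})=\delta(\mathbf{r}'-\mathbf{r})+\mu_1\mathsf{G}_1(\mathbf{r}')\mathsf{G}_1^*(\mathbf{r})$ (the whitening transformation of the interference-plus-noise field $\mathsf{Z}(\mathbf{r})=\mathsf{H}_1(\mathbf{r})\mathsf{J}_{\mathsf{ul},1}A_{\mathsf{u},1}s_{\mathsf{ul},1}+\mathsf{N}_{\mathsf{ul}}(\mathbf{r})$),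 and let $\overline{\mathsf{H}}_2(\mathbf{r}')=\int_{\mathcal{A}}\mathsf{W}_{\mathsf{Z}}(\mathbf{r}',\mathbf{r})\mathsf{H}_2(\mathbf{r})\mathrm{d}\mathbf{r}$. Then the SNR for decoding user 2's symbol obtained by first whitening with $\mathsf{W}_{\mathsf{Z}}$ and then applying the MRC detector matched to $\overline{\mathsf{H}}_2$, namely $$\gamma_{\mathsf{ul},2}=\frac{A_{\mathsf{u},2}^2|\mathsf{J}_{\mathsf{ul},2}|^2}{\sigma^2}\int_{\mathcal{A}}|\overline{\mathsf{H}}_2(\mathbf{r}')|^2\mathrm{d}\mathbf{r}',$$ equals $$\gamma_{\mathsf{ul},2}=\overline{\gamma}_{\mathsf{ul},2}\mathsf{g}_2\left(1-\frac{\overline{\gamma}_{\mathsf{ul},1}\mathsf{g}_1|\rho|^2}{1+\overline{\gamma}_{\mathsf{ul},1}\mathsf{g}_1}\right).$$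
   Context: $\delta$ is the Dirac delta, so $\overline{\mathsf{H}}_2(\mathbf{r}')=\mathsf{H}_2(\mathbf{r}')+\mu_1\mathsf{G}_1(\mathbf{r}')\int_{\mathcal{A}}\mathsf{G}_1^*(\mathbf{r})\mathsf{H}_2(\mathbf{r})\mathrm{d}\mathbf{r}$. In the paper, $\mathcal{A}$ is the base-station continuous aperture and $\mathsf{G}_k(\mathbf{r})=\frac{e^{-\mathrm{j}k_0\|\mathbf{r}-\mathbf{s}_k\|}}{\sqrt{4\pi}\|\mathbf{r}-\mathbf{s}_k\|}\sqrt{\frac{|\mathbf{e}^{\mathsf{T}}(\mathbf{s}_k-\mathbf{r})|}{\|\mathbf{r}-\mathbf{s}_k\|}}$ for user locations $\mathbf{s}_k\notin\overline{\mathcal{A}}$ and unit normal $\mathbf{e}$ of the aperture; $\mathsf{N}_{\mathsf{ul}}$ is white Gaussian noise of intensity $\sigma^2$, $s_{\mathsf{ul},k}$ unit-power symbols. *)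

theory Defs
  imports "HOL-Analysis.Analysis"
begin

definition L2_on :: "(real^3) set \<Rightarrow> (real^3 \<Rightarrow> complex) \<Rightarrow> bool" where
  "L2_on A G \<longleftrightarrow> set_borel_measurable lebesgue A G \<and>
     set_integrable lebesgue A (\<lambda>r. (cmod (G r))\<^sup>2)"

end

theory Submission
  imports Defs
begin

lemma L2_prod:
  assumes F: "L2_on A F" and G: "L2_on A G"
  shows "set_integrable lebesgue A (\<lambda>r. F r * cnj (G r))"
proof -
  have mF: "(\<lambda>x. indicator A x *\<^sub>R F x) \<in> borel_measurable lebesgue"
   and mG: "(\<lambda>x. indicator A x *\<^sub>R G x) \<in> borel_measurable lebesgue"
    using F G unfolding L2_on_def set_borel_measurable_def by auto
  have iF: "integrable lebesgue (\<lambda>x. indicator A x *\<^sub>R (cmod (F x))\<^sup>2)"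
   and iG: "integrable lebesgue (\<lambda>x. indicator A x *\<^sub>R (cmod (G x))\<^sup>2)"
    using F G unfolding L2_on_def set_integrable_def by auto
  have eq: "(\<lambda>x. indicator A x *\<^sub>R (F x * cnj (G x))) =
      (\<lambda>x. (indicator A x *\<^sub>R F x) * cnj (indicator A x *\<^sub>R G x))"
    by (auto simp: indicator_def)
  have m: "(\<lambda>x. indicator A x *\<^sub>R (F x * cnj (G x))) \<in> borel_measurable lebesgue"
  proof -
    have "(\<lambda>x. cnj (indicator A x *\<^sub>R G x)) \<in> borel_measurable lebesgue"
      by (rule borel_measurable_continuous_on[OF _ mG]) (intro continuous_intros)
    then show ?thesis unfolding eq using mF by measurable
  qed
  show ?thesis unfolding set_integrable_def
  proof (rule Bochner_Integration.integrable_bound[OF Bochner_Integration.integrable_add[OF iF iG] m])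
    show "AE x in lebesgue. norm (indicator A x *\<^sub>R (F x * cnj (G x)))
        \<le> norm (indicator A x *\<^sub>R (cmod (F x))\<^sup>2 + indicator A x *\<^sub>R (cmod (G x))\<^sup>2)"
    proof (rule AE_I2)
      fix x
      have b: "cmod (F x) * cmod (G x) \<le> (cmod (F x))\<^sup>2 + (cmod (G x))\<^sup>2"
        using sum_squares_bound[of "cmod (F x)" "cmod (G x)"]
          mult_nonneg_nonneg[OF norm_ge_zero norm_ge_zero, of "F x" "G x"] by linarith
      show "norm (indicator A x *\<^sub>R (F x * cnj (G x)))
        \<le> norm (indicator A x *\<^sub>R (cmod (F x))\<^sup>2 + indicator A x *\<^sub>R (cmod (G x))\<^sup>2)"
      proof (cases "x \<in> A")
        case True
        then show ?thesis using b by (simp add: norm_mult)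
      qed simp
    qed
  qed
qed
theorem theorem1:
  fixes A :: "(real^3) set"
    and G1 G2 H1 H2 Hbar2 :: "real^3 \<Rightarrow> complex"
    and k0 eta sigma2 Au1 Au2 g1 g2 gb1 gb2 s mu1 gamma2 :: real
    and J1 J2 rho :: complex
  assumes "A \<in> sets lebesgue" and "emeasure lebesgue A < \<infinity>" and "emeasure lebesgue A > 0"
    and "k0 > 0" and "eta > 0" and "sigma2 > 0"
    and "L2_on A G1" and "L2_on A G2"
    and "g1 = (LINT r:A|lebesgue. (cmod (G1 r))\<^sup>2)" and "g2 = (LINT r:A|lebesgue. (cmod (G2 r))\<^sup>2)"
    and "g1 > 0" and "g2 > 0"
    and "\<And>r. H1 r = (\<i> * of_real (k0 * eta / sqrt (4 * pi))) * G1 r"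
    and "\<And>r. H2 r = (\<i> * of_real (k0 * eta / sqrt (4 * pi))) * G2 r"
    and "Au1 > 0" and "Au2 > 0"
    and "gb1 = Au1\<^sup>2 * (cmod J1)\<^sup>2 * k0\<^sup>2 * eta\<^sup>2 / (4 * pi * sigma2)"
    and "gb2 = Au2\<^sup>2 * (cmod J2)\<^sup>2 * k0\<^sup>2 * eta\<^sup>2 / (4 * pi * sigma2)"
    and "rho = (LINT r:A|lebesgue. cnj (G1 r) * G2 r) / of_real (sqrt (g1 * g2))"
    and "s = 1 \<or> s = -1"
    and "mu1 = - 1 / g1 + s / (g1 * sqrt (1 + gb1 * g1))"
    and "\<And>r'. Hbar2 r' = H2 r' + of_real mu1 * G1 r' * (LINT r:A|lebesgue. cnj (G1 r) * H2 r)"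
    and "gamma2 = Au2\<^sup>2 * (cmod J2)\<^sup>2 / sigma2 * (LINT r':A|lebesgue. (cmod (Hbar2 r'))\<^sup>2)"
  shows "gamma2 = gb2 * g2 * (1 - gb1 * g1 * (cmod rho)\<^sup>2 / (1 + gb1 * g1))"
proof -
  note a = assms
  define K where "K = k0 * eta / sqrt (4 * pi)"
  define c where "c = \<i> * complex_of_real K"
  define I where "I = (LINT r:A|lebesgue. cnj (G1 r) * G2 r)"
  define m where "m = mu1"
  have H2c: "\<And>r. H2 r = c * G2 r" using a(14) unfolding c_def K_def by simp
  have i21: "set_integrable lebesgue A (\<lambda>r. G2 r * cnj (G1 r))" by (rule L2_prod[OF a(8) a(7)])
  have i12: "set_integrable lebesgue A (\<lambda>r. G1 r * cnj (G2 r))" by (rule L2_prod[OF a(7) a(8)])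
  have i11: "set_integrable lebesgue A (\<lambda>r. G1 r * cnj (G1 r))" by (rule L2_prod[OF a(7) a(7)])
  have i22: "set_integrable lebesgue A (\<lambda>r. G2 r * cnj (G2 r))" by (rule L2_prod[OF a(8) a(8)])
  have Ieq: "(LINT r:A|lebesgue. G2 r * cnj (G1 r)) = I"
    unfolding I_def by (simp add: mult.commute)
  have cI: "(LINT r:A|lebesgue. G1 r * cnj (G2 r)) = cnj I"
  proof -
    have "(LINT r:A|lebesgue. G1 r * cnj (G2 r)) = cnj (LINT r:A|lebesgue. G2 r * cnj (G1 r))"
      unfolding set_lebesgue_integral_def
      by (subst Bochner_Integration.integral_cnj[symmetric], rule Bochner_Integration.integral_cong)
         (auto simp: indicator_def mult.commute)
    then show ?thesis using Ieq by simp
  qed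
  have nsq: "\<And>z. z * cnj z = complex_of_real ((cmod z)\<^sup>2)"
    by (simp add: complex_norm_square del: of_real_power)
  have g1c: "(LINT r:A|lebesgue. G1 r * cnj (G1 r)) = of_real g1"
    unfolding nsq a(9) by (rule set_integral_complex_of_real)
  have g2c: "(LINT r:A|lebesgue. G2 r * cnj (G2 r)) = of_real g2"
    unfolding nsq a(10) by (rule set_integral_complex_of_real)
  have inner: "(LINT r:A|lebesgue. cnj (G1 r) * H2 r) = c * I"
    unfolding H2c I_def
    by (simp add: mult.left_commute)
  have Hb: "\<And>r. Hbar2 r = c * (G2 r + of_real m * I * G1 r)"
    using a(22) unfolding inner m_def by (simp add: H2c algebra_simps)
  have cc: "c * cnj c = of_real (K\<^sup>2)" unfolding c_def by (simp add: power2_eq_square algebra_simps)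
  have pw: "\<And>r. complex_of_real ((cmod (Hbar2 r))\<^sup>2) = of_real (K\<^sup>2) *
     (G2 r * cnj (G2 r) + (of_real m * cnj I) * (G2 r * cnj (G1 r)) + (of_real m * I) * (G1 r * cnj (G2 r))
      + (of_real (m\<^sup>2) * I * cnj I) * (G1 r * cnj (G1 r)))"
  proof -
    fix r
    have "complex_of_real ((cmod (Hbar2 r))\<^sup>2) = Hbar2 r * cnj (Hbar2 r)" by (simp add: nsq)
    also have "\<dots> = (c * cnj c) * ((G2 r + of_real m * I * G1 r) * cnj (G2 r + of_real m * I * G1 r))"
      unfolding Hb by (simp add: algebra_simps)
    also have "\<dots> = of_real (K\<^sup>2) *
     (G2 r * cnj (G2 r) + (of_real m * cnj I) * (G2 r * cnj (G1 r)) + (of_real m * I) * (G1 r * cnj (G2 r))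
      + (of_real (m\<^sup>2) * I * cnj I) * (G1 r * cnj (G1 r)))"
      unfolding cc by (simp add: algebra_simps power2_eq_square)
    finally show "?thesis r" .
  qed
  have "complex_of_real (LINT r':A|lebesgue. (cmod (Hbar2 r'))\<^sup>2)
     = (LINT r':A|lebesgue. complex_of_real ((cmod (Hbar2 r'))\<^sup>2))"
    by (rule set_integral_complex_of_real[symmetric])
  also have "\<dots> = of_real (K\<^sup>2) * (of_real g2 + (of_real m * cnj I) * I + (of_real m * I) * cnj I
      + (of_real (m\<^sup>2) * I * cnj I) * of_real g1)"
    unfolding pw set_integral_mult_right
    using i11 i12 i21 i22
    by (simp add: set_integral_add set_integrable_mult_right Ieq cI g1c g2c)
  also have "\<dots> = of_real (K\<^sup>2) * (of_real g2 + of_real m * (I * cnj I) + of_real m * (I * cnj I)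
      + of_real (m\<^sup>2) * (I * cnj I) * of_real g1)"
    by (simp add: algebra_simps)
  also have "\<dots> = of_real (K\<^sup>2 * (g2 + 2 * m * (cmod I)\<^sup>2 + m\<^sup>2 * (cmod I)\<^sup>2 * g1))"
    unfolding nsq by (simp add: algebra_simps del: of_real_power)
  finally have L: "(LINT r':A|lebesgue. (cmod (Hbar2 r'))\<^sup>2) = K\<^sup>2 * (g2 + 2 * m * (cmod I)\<^sup>2 + m\<^sup>2 * (cmod I)\<^sup>2 * g1)"
    using of_real_eq_iff by blast
  define x where "x = gb1 * g1"
  have gb1nn: "gb1 \<ge> 0" using a(17) a(6) by simp
  have x0: "x \<ge> 0" unfolding x_def using gb1nn a(11) by simp
  define t where "t = sqrt (1 + x)"
  have t0: "t > 0" unfolding t_def using x0 by simp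
  have tt: "t\<^sup>2 = 1 + x" unfolding t_def using x0 by simp
  have ss: "s\<^sup>2 = 1" using a(20) by auto
  have mg: "m * g1 = -1 + s / t" unfolding m_def a(21) t_def x_def using a(11)
    by (simp add: field_simps)
  have key: "(2 * m + m\<^sup>2 * g1) * g1 = - x / (1 + x)"
  proof -
    have "(2 * m + m\<^sup>2 * g1) * g1 = (m * g1 + 1)\<^sup>2 - 1" by (simp add: power2_eq_square algebra_simps)
    also have "\<dots> = s\<^sup>2 / t\<^sup>2 - 1" unfolding mg by (simp add: power_divide)
    also have "\<dots> = - x / (1 + x)" unfolding ss tt using x0 by (simp add: field_simps)
    finally show ?thesis .
  qed
  have gg: "sqrt (g1 * g2) > 0" using a(11) a(12) by simp
  have rho2: "(cmod I)\<^sup>2 = (cmod rho)\<^sup>2 * g1 * g2"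
    unfolding a(19) I_def[symmetric] using a(11) a(12)
    by (simp add: norm_divide power_divide)
  have K2: "K\<^sup>2 = k0\<^sup>2 * eta\<^sup>2 / (4 * pi)" unfolding K_def by (simp add: power_divide power_mult_distrib)
  have "gamma2 = Au2\<^sup>2 * (cmod J2)\<^sup>2 / sigma2 * K\<^sup>2 * (g2 + ((2 * m + m\<^sup>2 * g1) * g1) * (cmod rho)\<^sup>2 * g2)"
    unfolding a(23) L rho2 by (simp add: algebra_simps power2_eq_square)
  also have "\<dots> = gb2 * g2 * (1 - gb1 * g1 * (cmod rho)\<^sup>2 / (1 + gb1 * g1))"
    unfolding key K2 a(18) x_def[symmetric] using x0 a(6)
    by (simp add: field_simps)
  finally show ?thesis .
qed

end
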